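(* Let $G$ be a map graph with a corresponding planar bipartite graph $B$ and let $k$ be a positive integer. Let $\mathcal{C}\in\mathscr{S}$ and write $\mathcal{C}=\mathcal{C}_1\uplus\mathcal{C}_2$, where a cycle belongs to $\mathcal{C}_1$ if and only if it is a triangle contained in a special clique of $G$. Let $K_1$ and $K_2$ be special cliques of $G$. Then there do not exist two distinct vertices $u,v\in V(\mathcal{C}_2)\cap K_1\cap K_2$ and four edges $e_1,e_2,e_3,e_4$ such that (a) $e_1,e_2\in E(\mathcal{C}_2)\cap E(K_1)$, (b) $e_3,e_4\in E(\mathcal{C}_2)\cap E(K_2)$, (c) $u$ is incident with $e_1$ and $e_3$, and (d) $v$ is incident with $e_2$ and $e_4$.
   Context: All graphs are finite and simple. For a set $\mathcal{C}_2$ of cycles, $V(\mathcal{C}_2)$ and $E(\mathcal{C}_2)$ denote the union of their vertex sets and edge sets; $E(K)$ denotes the set of edges with both endpoints in $K$. For a bipartite graph $B$ with bipartition $V(B)=W\uplus U$, the half-square of $B$ is the graph on $W$ in which two vertices are adjacent iff they are at distance exactly $2$ in $B$. A graph $G$ is a map graph iff it is the half-square of some planar bipartite graph $B$; such $B$ (with $W=V(G)$) is a corresponding planar bipartite graph; for each $s\in U$, $N_B(s)$ is a clique of $G$ called a special clique. A solution is a set of $k$ pairwise vertex-disjoint cycles of $G$. $\mathscr{S}$ denotes the set of solutions consisting only of induced cycles of $G$ that, among all such solutions, have the maximum number of members that are triangles contained in a special clique. *)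

theory Defs
  imports "HOL-Analysis.Analysis"
begin

definition simple_graph :: "'a set \<Rightarrow> 'a set set \<Rightarrow> bool" where
  "simple_graph V E \<longleftrightarrow> finite V \<and> (\<forall>e\<in>E. e \<subseteq> V \<and> card e = 2)"

definition planar_graph :: "'a set \<Rightarrow> 'a set set \<Rightarrow> bool" where
  "planar_graph V E \<longleftrightarrow>
     (\<exists>(f :: 'a \<Rightarrow> complex) (\<gamma> :: 'a set \<Rightarrow> real \<Rightarrow> complex).
        inj_on f V \<and>
        (\<forall>e\<in>E. arc (\<gamma> e) \<and> {pathstart (\<gamma> e), pathfinish (\<gamma> e)} = f ` e) \<and>
        (\<forall>e\<in>E. \<forall>v\<in>V. f v \<in> path_image (\<gamma> e) \<longrightarrow> v \<in> e) \<and>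
        (\<forall>e\<in>E. \<forall>e'\<in>E. e \<noteq> e' \<longrightarrow>
            path_image (\<gamma> e) \<inter> path_image (\<gamma> e') = f ` (e \<inter> e')))"

definition bipartite_with :: "'a set \<Rightarrow> 'a set set \<Rightarrow> 'a set \<Rightarrow> 'a set \<Rightarrow> bool" where
  "bipartite_with VB EB W U \<longleftrightarrow> VB = W \<union> U \<and> W \<inter> U = {} \<and>
     (\<forall>e\<in>EB. card (e \<inter> W) = 1 \<and> card (e \<inter> U) = 1)"

definition nbhd :: "'a set set \<Rightarrow> 'a \<Rightarrow> 'a set" where
  "nbhd E x = {y. {x, y} \<in> E}"

definition dist_two :: "'a set set \<Rightarrow> 'a \<Rightarrow> 'a \<Rightarrow> bool" where
  "dist_two E x y \<longleftrightarrow> x \<noteq> y \<and> {x, y} \<notin> E \<and> (\<exists>z. {x, z} \<in> E \<and> {z, y} \<in> E)"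

definition half_square_edges :: "'a set set \<Rightarrow> 'a set \<Rightarrow> 'a set set" where
  "half_square_edges EB W = {{x, y} | x y. x \<in> W \<and> y \<in> W \<and> dist_two EB x y}"

definition corresponding_planar_bipartite ::
  "'a set \<Rightarrow> 'a set set \<Rightarrow> 'a set \<Rightarrow> 'a set set \<Rightarrow> 'a set \<Rightarrow> bool" where
  "corresponding_planar_bipartite V E VB EB U \<longleftrightarrow>
     simple_graph VB EB \<and> planar_graph VB EB \<and> bipartite_with VB EB V U \<and>
     E = half_square_edges EB V"

definition special_clique :: "'a set set \<Rightarrow> 'a set \<Rightarrow> 'a set \<Rightarrow> bool" where
  "special_clique EB U K \<longleftrightarrow> (\<exists>s\<in>U. K = nbhd EB s)"

definition is_cycle :: "'a set set \<Rightarrow> 'a set \<times> 'a set set \<Rightarrow> bool" where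
  "is_cycle E C \<longleftrightarrow> (\<exists>xs. distinct xs \<and> length xs \<ge> 3 \<and> fst C = set xs \<and>
      snd C = {{xs ! i, xs ! (Suc i mod length xs)} | i. i < length xs} \<and> snd C \<subseteq> E)"

definition edges_in :: "'a set set \<Rightarrow> 'a set \<Rightarrow> 'a set set" where
  "edges_in E K = {e \<in> E. e \<subseteq> K}"

definition induced_cycle :: "'a set set \<Rightarrow> 'a set \<times> 'a set set \<Rightarrow> bool" where
  "induced_cycle E C \<longleftrightarrow> is_cycle E C \<and> edges_in E (fst C) = snd C"

definition special_triangle :: "'a set set \<Rightarrow> 'a set \<Rightarrow> 'a set \<times> 'a set set \<Rightarrow> bool" where
  "special_triangle EB U C \<longleftrightarrow> card (fst C) = 3 \<and> (\<exists>K. special_clique EB U K \<and> fst C \<subseteq> K)"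

definition solution :: "'a set set \<Rightarrow> nat \<Rightarrow> ('a set \<times> 'a set set) set \<Rightarrow> bool" where
  "solution E k \<C> \<longleftrightarrow> finite \<C> \<and> card \<C> = k \<and> (\<forall>C\<in>\<C>. is_cycle E C) \<and>
     (\<forall>C\<in>\<C>. \<forall>C'\<in>\<C>. C \<noteq> C' \<longrightarrow> fst C \<inter> fst C' = {})"

definition induced_solution :: "'a set set \<Rightarrow> nat \<Rightarrow> ('a set \<times> 'a set set) set \<Rightarrow> bool" where
  "induced_solution E k \<C> \<longleftrightarrow> solution E k \<C> \<and> (\<forall>C\<in>\<C>. induced_cycle E C)"

definition best_solutions ::
  "'a set set \<Rightarrow> 'a set set \<Rightarrow> 'a set \<Rightarrow> nat \<Rightarrow> ('a set \<times> 'a set set) set set" where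
  "best_solutions E EB U k = {\<C>. induced_solution E k \<C> \<and>
     (\<forall>\<C>'. induced_solution E k \<C>' \<longrightarrow>
        card {C\<in>\<C>'. special_triangle EB U C} \<le> card {C\<in>\<C>. special_triangle EB U C})}"

end

theory Submission imports Defs begin
lemma suc_mod: "p < n \<Longrightarrow> Suc p mod n = (if Suc p = n then 0 else Suc p)"
  by (simp add: mod_Suc)
lemma arith3:
  fixes p q r n :: nat
  assumes "p < n" "q < n" "r < n" "p \<noteq> q" "q \<noteq> r" "p \<noteq> r" "n \<ge> 3"
    "Suc p mod n = q \<or> Suc q mod n = p" "Suc q mod n = r \<or> Suc r mod n = q"
    "Suc p mod n = r \<or> Suc r mod n = p"
  shows "n = 3"
  using assms unfolding suc_mod[OF assms(1)] suc_mod[OF assms(2)] suc_mod[OF assms(3)]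
  by (elim disjE; auto split: if_splits)

lemma adj:
  assumes "distinct xs" "i < length xs" "p < length xs" "q < length xs" "p \<noteq> q"
    "{xs!i, xs!(Suc i mod length xs)} = {xs!p, xs!q}"
  shows "Suc p mod length xs = q \<or> Suc q mod length xs = p"
proof -
  have "Suc i mod length xs < length xs" using assms(2) by (intro mod_less_divisor) auto
  then show ?thesis using assms by (auto simp: doubleton_eq_iff nth_eq_iff_index_eq)
qed

lemma edge_sub:
  assumes "is_cycle E C" "e \<in> snd C" shows "e \<subseteq> fst C"
proof -
  obtain xs where d: "distinct xs" "length xs \<ge> 3" "fst C = set xs"
    "snd C = {{xs ! i, xs ! (Suc i mod length xs)} | i. i < length xs}"
    using assms(1) unfolding is_cycle_def by blast
  then obtain i where i: "i < length xs" "e = {xs ! i, xs ! (Suc i mod length xs)}"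
    using assms(2) by auto
  have "Suc i mod length xs < length xs" using i by (intro mod_less_divisor) auto
  then show ?thesis using i d by auto
qed

lemma cyc3:
  assumes "is_cycle E C" "{x,y} \<in> snd C" "{y,z} \<in> snd C" "{x,z} \<in> snd C"
    "x \<noteq> y" "y \<noteq> z" "x \<noteq> z"
  shows "card (fst C) = 3"
proof -
  obtain xs where d: "distinct xs" "length xs \<ge> 3" "fst C = set xs"
    and s: "snd C = {{xs ! i, xs ! (Suc i mod length xs)} | i. i < length xs}"
    using assms(1) unfolding is_cycle_def by blast
  have mem: "x \<in> set xs" "y \<in> set xs" "z \<in> set xs"
    using edge_sub[OF assms(1) assms(2)] edge_sub[OF assms(1) assms(3)] d(3) by auto
  obtain p where p: "p < length xs" "xs!p = x" using mem(1) by (auto simp: in_set_conv_nth)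
  obtain q where q: "q < length xs" "xs!q = y" using mem(2) by (auto simp: in_set_conv_nth)
  obtain r where r: "r < length xs" "xs!r = z" using mem(3) by (auto simp: in_set_conv_nth)
  have pqr: "p < length xs" "q < length xs" "r < length xs" "xs!p = x" "xs!q = y" "xs!r = z"
    using p q r by auto
  have ne: "p \<noteq> q" "q \<noteq> r" "p \<noteq> r" using pqr assms(5-7) by auto
  have A: "Suc a mod length xs = b \<or> Suc b mod length xs = a"
    if "{xs!a, xs!b} \<in> snd C" "a < length xs" "b < length xs" "a \<noteq> b" for a b
  proof -
    have "\<exists>i. i < length xs \<and> {xs!a, xs!b} = {xs ! i, xs ! (Suc i mod length xs)}"
      using that(1) s by auto
    then obtain i where "i < length xs" "{xs ! i, xs ! (Suc i mod length xs)} = {xs!a, xs!b}"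
      by metis
    then show ?thesis using adj[OF d(1) _ that(2,3,4)] by blast
  qed
  have "length xs = 3"
    apply (rule arith3[OF pqr(1-3) ne d(2)])
    using A[of p q] A[of q r] A[of p r] pqr ne assms(2-4) by auto
  then show ?thesis using d distinct_card by metis
qed

lemma card2E:
  assumes "card e = 2" "u \<in> e" obtains a where "e = {u,a}" "a \<noteq> u"
  using assms by (auto simp: card_2_iff doubleton_eq_iff) 

lemma clique_edge:
  assumes "corresponding_planar_bipartite V E VB EB U" "special_clique EB U K"
    "x \<in> K" "y \<in> K" "x \<noteq> y"
  shows "{x,y} \<in> E"
proof -
  obtain s where s: "s \<in> U" "K = nbhd EB s" using assms(2) unfolding special_clique_def by blast
  have sx: "{s,x} \<in> EB" and sy: "{s,y} \<in> EB" using s assms(3,4) by (auto simp: nbhd_def)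
  have bp: "bipartite_with VB EB V U" and Edef: "E = half_square_edges EB V"
    using assms(1) unfolding corresponding_planar_bipartite_def by auto
  have sV: "s \<notin> V" using bp s unfolding bipartite_with_def by auto
  have inV: "w \<in> V" if "{s,w} \<in> EB" for w
  proof (rule ccontr)
    assume "w \<notin> V"
    then have "{s,w} \<inter> V = {}" using sV by auto
    then show False using bp that unfolding bipartite_with_def by force
  qed
  have xV: "x \<in> V" and yV: "y \<in> V" using inV sx sy by auto
  have "{x,y} \<notin> EB"
  proof
    assume "{x,y} \<in> EB"
    then have "card ({x,y} \<inter> V) = 1" using bp unfolding bipartite_with_def by auto
    moreover have "{x,y} \<inter> V = {x,y}" using xV yV by auto
    ultimately show False using assms(5) by auto
  qed
  moreover have "{x,s} \<in> EB" using sx by (simp add: insert_commute)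
  ultimately have "dist_two EB x y" using sy assms(5) unfolding dist_two_def by blast
  then show ?thesis unfolding Edef half_square_edges_def using xV yV by blast
qed

lemma three_set: "{f i | i. i < (3::nat)} = {f 0, f 1, f 2}"
  by (auto simp: numeral_3_eq_3 numeral_2_eq_2 less_Suc_eq)

lemma three_set': "{f i | i. i < Suc (Suc (Suc 0))} = {f 0, f (Suc 0), f (Suc (Suc 0))}"
  by (auto simp: less_Suc_eq)

lemma tri_edges: "{{[x,y,z] ! i, [x,y,z] ! (Suc i mod length [x,y,z])} | i. i < length [x,y,z]}
   = {{x,y},{y,z},{x,z}}"
  by (simp add: three_set' insert_commute)

lemma tri_induced:
  assumes "simple_graph V E" "{x,y} \<in> E" "{y,z} \<in> E" "{x,z} \<in> E"
    "x \<noteq> y" "y \<noteq> z" "x \<noteq> z"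
  shows "induced_cycle E ({x,y,z}, {{x,y},{y,z},{x,z}})"
  unfolding induced_cycle_def
proof
  show "is_cycle E ({x,y,z}, {{x,y},{y,z},{x,z}})"
    unfolding is_cycle_def
    apply (rule exI[of _ "[x,y,z]"])
    apply (simp only: tri_edges fst_conv snd_conv)
    using assms by simp
  show "edges_in E (fst ({x,y,z}, {{x,y},{y,z},{x,z}})) = snd ({x,y,z}, {{x,y},{y,z},{x,z}})"
  proof
    show "edges_in E (fst ({x, y, z}, {{x, y}, {y, z}, {x, z}}))
      \<subseteq> snd ({x, y, z}, {{x, y}, {y, z}, {x, z}})"
    proof
      fix e assume "e \<in> edges_in E (fst ({x, y, z}, {{x, y}, {y, z}, {x, z}}))"
      then have "e \<in> E" "e \<subseteq> {x,y,z}" by (auto simp: edges_in_def)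
      then have "card e = 2" using assms(1) unfolding simple_graph_def by auto
      then obtain p q where "e = {p,q}" "p \<noteq> q" by (auto simp: card_2_iff)
      then show "e \<in> snd ({x, y, z}, {{x, y}, {y, z}, {x, z}})"
        using \<open>e \<subseteq> {x,y,z}\<close> by (auto simp: insert_commute)
    qed
    show "snd ({x, y, z}, {{x, y}, {y, z}, {x, z}}) \<subseteq> edges_in E (fst ({x, y, z}, {{x, y}, {y, z}, {x, z}}))"
      using assms by (auto simp: edges_in_def)
  qed
qed

lemma tri_special:
  assumes "special_clique EB U K" "x \<in> K" "y \<in> K" "z \<in> K" "x \<noteq> y" "y \<noteq> z" "x \<noteq> z"
  shows "special_triangle EB U ({x,y,z}, T)"
  using assms unfolding special_triangle_def by auto

theorem lemma41:
  fixes V :: "'a set" and E :: "'a set set" and VB :: "'a set" and EB :: "'a set set"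
    and U :: "'a set" and k :: nat and \<C> :: "('a set \<times> 'a set set) set"
    and K1 K2 :: "'a set"
  assumes "simple_graph V E"
    and "corresponding_planar_bipartite V E VB EB U"
    and "k \<ge> 1"
    and "\<C> \<in> best_solutions E EB U k"
    and "special_clique EB U K1" and "special_clique EB U K2"
  shows "\<not> (\<exists>u v e1 e2 e3 e4.
            u \<noteq> v \<and>
            u \<in> \<Union>(fst ` {C\<in>\<C>. \<not> special_triangle EB U C}) \<inter> K1 \<inter> K2 \<and>
            v \<in> \<Union>(fst ` {C\<in>\<C>. \<not> special_triangle EB U C}) \<inter> K1 \<inter> K2 \<and>
            distinct [e1, e2, e3, e4] \<and>
            e1 \<in> \<Union>(snd ` {C\<in>\<C>. \<not> special_triangle EB U C}) \<inter> edges_in E K1 \<and>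
            e2 \<in> \<Union>(snd ` {C\<in>\<C>. \<not> special_triangle EB U C}) \<inter> edges_in E K1 \<and>
            e3 \<in> \<Union>(snd ` {C\<in>\<C>. \<not> special_triangle EB U C}) \<inter> edges_in E K2 \<and>
            e4 \<in> \<Union>(snd ` {C\<in>\<C>. \<not> special_triangle EB U C}) \<inter> edges_in E K2 \<and>
            u \<in> e1 \<and> u \<in> e3 \<and> v \<in> e2 \<and> v \<in> e4)"
proof
  assume "\<exists>u v e1 e2 e3 e4.
            u \<noteq> v \<and>
            u \<in> \<Union>(fst ` {C\<in>\<C>. \<not> special_triangle EB U C}) \<inter> K1 \<inter> K2 \<and>
            v \<in> \<Union>(fst ` {C\<in>\<C>. \<not> special_triangle EB U C}) \<inter> K1 \<inter> K2 \<and>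
            distinct [e1, e2, e3, e4] \<and>
            e1 \<in> \<Union>(snd ` {C\<in>\<C>. \<not> special_triangle EB U C}) \<inter> edges_in E K1 \<and>
            e2 \<in> \<Union>(snd ` {C\<in>\<C>. \<not> special_triangle EB U C}) \<inter> edges_in E K1 \<and>
            e3 \<in> \<Union>(snd ` {C\<in>\<C>. \<not> special_triangle EB U C}) \<inter> edges_in E K2 \<and>
            e4 \<in> \<Union>(snd ` {C\<in>\<C>. \<not> special_triangle EB U C}) \<inter> edges_in E K2 \<and>
            u \<in> e1 \<and> u \<in> e3 \<and> v \<in> e2 \<and> v \<in> e4"
  then obtain u v e1 e2 e3 e4 where H: "u \<noteq> v" "u \<in> K1" "u \<in> K2" "v \<in> K1" "v \<in> K2"
      "distinct [e1, e2, e3, e4]"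
      "e1 \<in> \<Union>(snd ` {C\<in>\<C>. \<not> special_triangle EB U C})" "e1 \<in> edges_in E K1"
      "e2 \<in> \<Union>(snd ` {C\<in>\<C>. \<not> special_triangle EB U C})" "e2 \<in> edges_in E K1"
      "e3 \<in> \<Union>(snd ` {C\<in>\<C>. \<not> special_triangle EB U C})" "e3 \<in> edges_in E K2"
      "e4 \<in> \<Union>(snd ` {C\<in>\<C>. \<not> special_triangle EB U C})" "e4 \<in> edges_in E K2"
      "u \<in> e1" "u \<in> e3" "v \<in> e2" "v \<in> e4"
    by blast
  have IS: "induced_solution E k \<C>"
    and MAX: "\<And>\<C>'. induced_solution E k \<C>' \<Longrightarrow>
        card {C\<in>\<C>'. special_triangle EB U C} \<le> card {C\<in>\<C>. special_triangle EB U C}"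
    using assms(4) unfolding best_solutions_def by auto
  have fin: "finite \<C>" and cardC: "card \<C> = k" and cyc: "\<And>C. C \<in> \<C> \<Longrightarrow> is_cycle E C"
    and disj: "\<And>C C'. C \<in> \<C> \<Longrightarrow> C' \<in> \<C> \<Longrightarrow> C \<noteq> C' \<Longrightarrow> fst C \<inter> fst C' = {}"
    and ind: "\<And>C. C \<in> \<C> \<Longrightarrow> induced_cycle E C"
    using IS unfolding induced_solution_def solution_def by auto
  obtain D1 where D1: "D1 \<in> \<C>" "\<not> special_triangle EB U D1" "e1 \<in> snd D1" using H(7) by auto
  obtain D2 where D2: "D2 \<in> \<C>" "\<not> special_triangle EB U D2" "e2 \<in> snd D2" using H(9) by auto
  obtain D3 where D3: "D3 \<in> \<C>" "\<not> special_triangle EB U D3" "e3 \<in> snd D3" using H(11) by auto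
  obtain D4 where D4: "D4 \<in> \<C>" "\<not> special_triangle EB U D4" "e4 \<in> snd D4" using H(13) by auto
  have sub1: "e1 \<subseteq> fst D1" using edge_sub[OF cyc[OF D1(1)] D1(3)] .
  have sub2: "e2 \<subseteq> fst D2" using edge_sub[OF cyc[OF D2(1)] D2(3)] .
  have sub3: "e3 \<subseteq> fst D3" using edge_sub[OF cyc[OF D3(1)] D3(3)] .
  have sub4: "e4 \<subseteq> fst D4" using edge_sub[OF cyc[OF D4(1)] D4(3)] .
  have "D1 = D3" using disj[OF D1(1) D3(1)] sub1 sub3 H(15,16) by blast
  have "D2 = D4" using disj[OF D2(1) D4(1)] sub2 sub4 H(17,18) by blast
  have card2: "\<And>e K. e \<in> edges_in E K \<Longrightarrow> card e = 2 \<and> e \<in> E \<and> e \<subseteq> K"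
    using assms(1) unfolding simple_graph_def edges_in_def by auto
  obtain a where a: "e1 = {u,a}" "a \<noteq> u" using card2[OF H(8)] H(15) card2E by metis
  obtain b where b: "e3 = {u,b}" "b \<noteq> u" using card2[OF H(12)] H(16) card2E by metis
  obtain c where c: "e2 = {v,c}" "c \<noteq> v" using card2[OF H(10)] H(17) card2E by metis
  obtain d where d: "e4 = {v,d}" "d \<noteq> v" using card2[OF H(14)] H(18) card2E by metis
  have aK: "a \<in> K1" using card2[OF H(8)] a by auto
  have bK: "b \<in> K2" using card2[OF H(12)] b by auto
  have cK: "c \<in> K1" using card2[OF H(10)] c by auto
  have dK: "d \<in> K2" using card2[OF H(14)] d by auto
  have in1: "u \<in> fst D1" "a \<in> fst D1" "b \<in> fst D1"
    using sub1 sub3 a b \<open>D1 = D3\<close> by auto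
  have in2: "v \<in> fst D2" "c \<in> fst D2" "d \<in> fst D2"
    using sub2 sub4 c d \<open>D2 = D4\<close> by auto
  have ab: "a \<noteq> b" using H(6) a b by auto
  have cd: "c \<noteq> d" using H(6) c d by auto
  have no3: False if D: "D \<in> \<C>" "\<not> special_triangle EB U D" and K: "special_clique EB U K"
    and xyz: "x \<in> fst D" "y \<in> fst D" "z \<in> fst D" "x \<in> K" "y \<in> K" "z \<in> K"
    "x \<noteq> y" "y \<noteq> z" "x \<noteq> z" for D K x y z
  proof -
    have "{x,y} \<in> E" "{y,z} \<in> E" "{x,z} \<in> E"
      using clique_edge[OF assms(2) K] xyz by auto
    moreover have "edges_in E (fst D) = snd D" using ind[OF D(1)] unfolding induced_cycle_def by auto
    ultimately have "{x,y} \<in> snd D" "{y,z} \<in> snd D" "{x,z} \<in> snd D"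
      using xyz unfolding edges_in_def by auto
    then have c3: "card (fst D) = 3" using cyc3[OF cyc[OF D(1)]] xyz by auto
    have "finite (fst D)" using c3 card.infinite by fastforce
    then have "fst D = {x,y,z}" using c3 xyz by (intro card_subset_eq[symmetric]) auto
    then have "special_triangle EB U D" unfolding special_triangle_def using c3 K xyz by auto
    then show False using D(2) by simp
  qed
  show False
  proof (cases "D1 = D2")
    case True
    have "a = v"
      using no3[OF D1(1,2) assms(5), of u a v] in1 in2 True H aK a by blast
    moreover have "b = v"
      using no3[OF D1(1,2) assms(6), of u b v] in1 in2 True H bK b by blast
    ultimately show False using a b H(6) by auto
  next
    case False
    have dj: "fst D1 \<inter> fst D2 = {}" using disj[OF D1(1) D2(1) False] .
    have dist: "u \<noteq> a" "u \<noteq> c" "a \<noteq> c" "v \<noteq> b" "v \<noteq> d" "b \<noteq> d"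
      using dj in1 in2 a(2) d(2) by auto
    have dist2: "{u,a,c} \<inter> {v,b,d} = {}" using dj in1 in2 ab cd H(1) b(2) c(2) by auto
    define T1 where "T1 = ({u,a,c}, {{u,a},{a,c},{u,c}})"
    define T2 where "T2 = ({v,b,d}, {{v,b},{b,d},{v,d}})"
    have E1: "{u,a} \<in> E" "{a,c} \<in> E" "{u,c} \<in> E"
      using clique_edge[OF assms(2) assms(5)] H(2) aK cK dist by auto
    have E2: "{v,b} \<in> E" "{b,d} \<in> E" "{v,d} \<in> E"
      using clique_edge[OF assms(2) assms(6)] H(5) bK dK dist by auto
    have T1i: "induced_cycle E T1" unfolding T1_def using tri_induced[OF assms(1) E1] dist by auto
    have T2i: "induced_cycle E T2" unfolding T2_def using tri_induced[OF assms(1) E2] dist by auto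
    have T1s: "special_triangle EB U T1" unfolding T1_def
      using tri_special[OF assms(5)] H(2) aK cK dist by auto
    have T2s: "special_triangle EB U T2" unfolding T2_def
      using tri_special[OF assms(6)] H(5) bK dK dist by auto
    have T1D1: "T1 \<noteq> D1" "T1 \<noteq> D2" "T2 \<noteq> D1" "T2 \<noteq> D2"
      using T1s T2s D1(2) D2(2) by auto
    have T1n: "T1 \<notin> \<C>"
    proof
      assume "T1 \<in> \<C>"
      then have "fst T1 \<inter> fst D1 = {}" using disj D1(1) T1D1 by auto
      then show False using in1 unfolding T1_def by auto
    qed
    have T2n: "T2 \<notin> \<C>"
    proof
      assume "T2 \<in> \<C>"
      then have "fst T2 \<inter> fst D2 = {}" using disj D2(1) T1D1 by auto
      then show False using in2 unfolding T2_def by auto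
    qed
    have T12: "T1 \<noteq> T2" using dist2 unfolding T1_def T2_def by auto
    define C' where "C' = (\<C> - {D1,D2}) \<union> {T1,T2}"
    have cardA: "card (\<C> - {D1,D2}) = k - 2"
      using fin D1(1) D2(1) False cardC by (simp add: card_Diff_subset)
    have k2: "k \<ge> 2"
    proof -
      have "card {D1,D2} \<le> card \<C>" using fin D1(1) D2(1) by (intro card_mono) auto
      then show ?thesis using False cardC by simp
    qed
    have cardC': "card C' = k"
      unfolding C'_def using cardA k2 T1n T2n T12 fin
      by (subst card_Un_disjoint) auto
    have solC': "induced_solution E k C'"
      unfolding induced_solution_def solution_def
    proof (intro conjI ballI impI)
      show "finite C'" unfolding C'_def using fin by auto
      show "card C' = k" by (rule cardC')
      fix C assume "C \<in> C'"
      then show "induced_cycle E C" unfolding C'_def using ind T1i T2i by blast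
      then show "is_cycle E C" unfolding induced_cycle_def by auto
    next
      fix C Y assume CC0: "C \<in> C'" "Y \<in> C'" "C \<noteq> Y"
      have CC: "C \<in> (\<C> - {D1,D2}) \<union> {T1,T2}" "Y \<in> (\<C> - {D1,D2}) \<union> {T1,T2}" "C \<noteq> Y"
        using CC0 unfolding C'_def by auto
      have sT1: "fst T1 \<subseteq> fst D1 \<union> fst D2" unfolding T1_def using in1 in2 by auto
      have sT2: "fst T2 \<subseteq> fst D1 \<union> fst D2" unfolding T2_def using in1 in2 by auto
      have o: "fst X \<inter> fst T = {}" if "X \<in> \<C> - {D1,D2}" "T \<in> {T1,T2}" for X T
      proof -
        have "fst X \<inter> fst D1 = {}" "fst X \<inter> fst D2 = {}" using disj that(1) D1(1) D2(1) by auto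
        then show ?thesis using that(2) sT1 sT2 by blast
      qed
      have t: "fst T1 \<inter> fst T2 = {}" using dist2 unfolding T1_def T2_def by auto
      show "fst C \<inter> fst Y = {}"
        using CC o[of C Y] o[of Y C] disj[of C Y] t by blast
    qed
    have eq: "{C\<in>C'. special_triangle EB U C} = {C\<in>\<C>. special_triangle EB U C} \<union> {T1,T2}"
      unfolding C'_def using T1s T2s D1(2) D2(2) by auto
    have "card {C\<in>C'. special_triangle EB U C} = card {C\<in>\<C>. special_triangle EB U C} + 2"
      unfolding eq using fin T1n T2n T12 by (subst card_Un_disjoint) auto
    then show False using MAX[OF solC'] by simp
  qed
qed

end
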